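(* Let $\mathbf M=(m_1,\dots,m_r)$ be a Motzkin path and suppose the seed $(\mathbf x,B)$ is obtained from $(\mathbf x_0,B_0)$ by a finite sequence of $Q$-system mutations, each intermediate cluster being of the form $\mathbf x_{\mathbf M'}$ for a Motzkin path $\mathbf M'$, and the final cluster being $\mathbf x_{\mathbf M}$. Then $B=B(\mathbf M)$ where, for $1\le i,j\le r$ and with $C$ the Cartan matrix of $A_r$, $$B(\mathbf M)_{i,j}=(-1)^{\lfloor\frac{m_j+1}{2}\rfloor}\Bigl((-1)^{\lfloor\frac{m_i}{2}\rfloor}-(-1)^{\lfloor\frac{m_j}{2}\rfloor}\Bigr)\delta_{|i-j|,1},$$ $$B(\mathbf M)_{i,j+r}=(-1)^{\lfloor\frac{m_i+1}{2}\rfloor+\lfloor\frac{m_j}{2}\rfloor+1}C_{i,j},\qquad B(\mathbf M)_{i+r,j}=(-1)^{\lfloor\frac{m_i}{2}\rfloor+\lfloor\frac{m_j+1}{2}\rfloor}C_{i,j},$$ $$B(\mathbf M)_{i+r,j+r}=(-1)^{\lfloor\frac{m_i}{2}\rfloor}\Bigl((-1)^{\lfloor\frac{m_j+1}{2}\rfloor}-(-1)^{\lfloor\frac{m_i+1}{2}\rfloor}\Bigr)\delta_{|i-j|,1}.$$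
   Context: Fix $r\ge1$, $I_r=\{1,\dots,r\}$, and let $(R_{\alpha,n})_{0\le\alpha\le r+1,n\in\mathbb Z}$ be the $A_r$ $Q$-system: $R_{1,0},\dots,R_{r,0},R_{1,1},\dots,R_{r,1}$ are algebraically independent indeterminates, $R_{0,n}=R_{r+1,n}=1$, and $R_{\alpha,n+1}R_{\alpha,n-1}=R_{\alpha,n}^2+R_{\alpha+1,n}R_{\alpha-1,n}$. $C$ is the $r\times r$ Cartan matrix of $A_r$ ($C_{ii}=2$, $C_{ij}=-1$ if $|i-j|=1$, $0$ otherwise). Cluster algebra conventions (rank $2r$, no coefficients): a seed is a pair $(\mathbf x,B)$ with $\mathbf x=(x_1,\dots,x_{2r})$ and $B$ a skew-symmetric integer $2r\times 2r$ matrix. The mutation $\mu_k$ replaces $x_k$ by $x_k'=x_k^{-1}\bigl(\prod_i x_i^{[B_{ik}]_+}+\prod_i x_i^{[-B_{ik}]_+}\bigr)$ ($[n]_+=\max(n,0)$), leaves other $x_j$ unchanged, and replaces $B$ by $B'$ with $B'_{ij}=-B_{ij}$ if $i=k$ or $j=k$, and $B'_{ij}=B_{ij}+\mathrm{sign}(B_{ik})[B_{ik}B_{kj}]_+$ otherwise. The initial seed is $\mathbf x_0=(R_{1,0},\dots,R_{r,0},R_{1,1},\dots,R_{r,1})$, $B_0=\begin{pmatrix}0&-C\\ C&0\end{pmatrix}$ (so $(B_0)_{i,j+r}=-C_{ij}$, $(B_0)_{i+r,j}=C_{ij}$). A Motzkin path is $\mathbf M=(m_1,\dots,m_r)\in\mathbb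 Z^r$ with $|m_{\alpha+1}-m_\alpha|\le1$ for $1\le\alpha<r$. Its cluster $\mathbf x_{\mathbf M}=(x_1,\dots,x_{2r})$ is defined by: for $\alpha\in I_r$, $x_\alpha$ is whichever of $R_{\alpha,m_\alpha},R_{\alpha,m_\alpha+1}$ has even second index and $x_{\alpha+r}$ is the one with odd second index (so $\mathbf x_{(0,\dots,0)}=\mathbf x_0$). A $Q$-system mutation is a mutation $\mu_k$ ($k=\alpha$ or $k=\alpha+r$) replacing a cluster entry $R_{\alpha,n\mp1}$ by $R_{\alpha,n\pm1}$, i.e. one that changes one $m_\alpha$ by $\pm1$. *)

theory Defs
  imports Main "HOL-Library.Poly_Mapping"
begin

text \<open>Polynomials with integer coefficients in variables indexed by nat:
  a finitely supported map from monomials (finitely supported exponent vectors)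
  to integer coefficients; evaluated at a family of field elements.\<close>

definition int_poly_eval :: "((nat \<Rightarrow>\<^sub>0 nat) \<Rightarrow>\<^sub>0 int) \<Rightarrow> (nat \<Rightarrow> 'a::field) \<Rightarrow> 'a" where
  "int_poly_eval p v =
     (\<Sum>m\<in>Poly_Mapping.keys p. of_int (Poly_Mapping.lookup p m) *
        (\<Prod>i\<in>Poly_Mapping.keys m. v i ^ Poly_Mapping.lookup m i))"

definition alg_indep :: "nat set \<Rightarrow> (nat \<Rightarrow> 'a::field) \<Rightarrow> bool" where
  "alg_indep I v \<longleftrightarrow>
     (\<forall>p. (\<forall>m\<in>Poly_Mapping.keys p. Poly_Mapping.keys m \<subseteq> I) \<longrightarrow>
          int_poly_eval p v = 0 \<longrightarrow> p = 0)"

definition is_Q_system :: "nat \<Rightarrow> (nat \<Rightarrow> int \<Rightarrow> 'a::field) \<Rightarrow> bool" where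
  "is_Q_system r R \<longleftrightarrow>
     (\<forall>n. R 0 n = 1 \<and> R (r + 1) n = 1) \<and>
     (\<forall>\<alpha>\<in>{1..r}. \<forall>n. R \<alpha> (n + 1) * R \<alpha> (n - 1) = (R \<alpha> n)^2 + R (\<alpha> + 1) n * R (\<alpha> - 1) n)"

definition cartan :: "nat \<Rightarrow> nat \<Rightarrow> int" where
  "cartan i j = (if i = j then 2 else if i = j + 1 \<or> j = i + 1 then -1 else 0)"

definition B0 :: "nat \<Rightarrow> nat \<Rightarrow> nat \<Rightarrow> int" where
  "B0 r i j =
     (if i \<le> r \<and> j \<le> r then 0
      else if i \<le> r \<and> r < j then - cartan i (j - r)
      else if r < i \<and> j \<le> r then cartan (i - r) j
      else 0)"

text \<open>Motzkin paths M = (m_1,...,m_r), stored as a function on indices 1..r.\<close>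

definition motzkin :: "nat \<Rightarrow> (nat \<Rightarrow> int) \<Rightarrow> bool" where
  "motzkin r M \<longleftrightarrow> (\<forall>\<alpha>. 1 \<le> \<alpha> \<and> \<alpha> < r \<longrightarrow> \<bar>M (\<alpha> + 1) - M \<alpha>\<bar> \<le> 1)"

definition motzkin_cluster :: "nat \<Rightarrow> (nat \<Rightarrow> int \<Rightarrow> 'a) \<Rightarrow> (nat \<Rightarrow> int) \<Rightarrow> nat \<Rightarrow> 'a" where
  "motzkin_cluster r R M i =
     (if i \<le> r then (if even (M i) then R i (M i) else R i (M i + 1))
      else (if odd (M (i - r)) then R (i - r) (M (i - r)) else R (i - r) (M (i - r) + 1)))"

definition mutate_x :: "nat \<Rightarrow> (nat \<Rightarrow> nat \<Rightarrow> int) \<Rightarrow> nat \<Rightarrow> (nat \<Rightarrow> 'a::field) \<Rightarrow> nat \<Rightarrow> 'a" where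
  "mutate_x r B k x = x(k :=
     ((\<Prod>i\<in>{1..2*r}. x i ^ nat (max (B i k) 0)) + (\<Prod>i\<in>{1..2*r}. x i ^ nat (max (- B i k) 0))) / x k)"

definition mutate_B :: "nat \<Rightarrow> (nat \<Rightarrow> nat \<Rightarrow> int) \<Rightarrow> nat \<Rightarrow> nat \<Rightarrow> int" where
  "mutate_B k B i j =
     (if i = k \<or> j = k then - B i j
      else B i j + sgn (B i k) * max (B i k * B k j) 0)"

definition Q_mutation_step :: "nat \<Rightarrow> (nat \<Rightarrow> int) \<Rightarrow> (nat \<Rightarrow> int) \<Rightarrow> nat \<Rightarrow> bool" where
  "Q_mutation_step r M M' k \<longleftrightarrow>
     (\<exists>\<alpha>\<in>{1..r}. \<exists>e\<in>{1, -1}.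
        (\<forall>\<beta>\<in>{1..r}. M' \<beta> = (if \<beta> = \<alpha> then M \<alpha> + e else M \<beta>)) \<and>
        (k = \<alpha> \<or> k = \<alpha> + r))"

definition neg1pow :: "int \<Rightarrow> int" where
  "neg1pow k = (if even k then 1 else -1)"

definition kdelta1 :: "nat \<Rightarrow> nat \<Rightarrow> int" where
  "kdelta1 i j = (if i = j + 1 \<or> j = i + 1 then 1 else 0)"

text \<open>The matrix B(M) (indices 1..2r); floor((m+1)/2) = (m+1) div 2 on int.\<close>

definition B_of_M :: "nat \<Rightarrow> (nat \<Rightarrow> int) \<Rightarrow> nat \<Rightarrow> nat \<Rightarrow> int" where
  "B_of_M r M p q =
     (if p \<le> r \<and> q \<le> r then
        (let i = p; j = q in
          neg1pow ((M j + 1) div 2) * (neg1pow (M i div 2) - neg1pow (M j div 2)) * kdelta1 i j)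
      else if p \<le> r \<and> r < q then
        (let i = p; j = q - r in
          neg1pow ((M i + 1) div 2 + M j div 2 + 1) * cartan i j)
      else if r < p \<and> q \<le> r then
        (let i = p - r; j = q in
          neg1pow (M i div 2 + (M j + 1) div 2) * cartan i j)
      else
        (let i = p - r; j = q - r in
          neg1pow (M i div 2) * (neg1pow ((M j + 1) div 2) - neg1pow ((M i + 1) div 2)) * kdelta1 i j))"

end

theory Submission
  imports Defs "HOL.Rat"
begin

definition mon :: "(nat \<Rightarrow>\<^sub>0 nat) \<Rightarrow> (nat \<Rightarrow> 'a::field) \<Rightarrow> 'a" where
 "mon m v = (\<Prod>i\<in>Poly_Mapping.keys m. v i ^ Poly_Mapping.lookup m i)"

lemma mon_superset:
  assumes "finite K" "Poly_Mapping.keys m \<subseteq> K"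
  shows "mon m v = (\<Prod>i\<in>K. v i ^ Poly_Mapping.lookup m i)"
  unfolding mon_def using assms
  by (intro prod.mono_neutral_left) (auto simp: in_keys_iff)

lemma mon_add: "mon (a + b) v = mon a v * mon b v"
proof -
  let ?K = "Poly_Mapping.keys a \<union> Poly_Mapping.keys b"
  have f: "finite ?K" by simp
  have "mon (a+b) v = (\<Prod>i\<in>?K. v i ^ Poly_Mapping.lookup (a+b) i)"
    by (rule mon_superset[OF f]) (rule keys_add)
  also have "\<dots> = (\<Prod>i\<in>?K. v i ^ Poly_Mapping.lookup a i * v i ^ Poly_Mapping.lookup b i)"
    by (simp add: lookup_add power_add)
  also have "\<dots> = mon a v * mon b v"
    by (simp add: prod.distrib mon_superset[OF f])
  finally show ?thesis .
qed

lemma eval_mon: "int_poly_eval p v = (\<Sum>m\<in>Poly_Mapping.keys p. of_int (Poly_Mapping.lookup p m) * mon m v)"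
  by (simp add: int_poly_eval_def mon_def)

lemma eval_superset:
  assumes "finite K" "Poly_Mapping.keys p \<subseteq> K"
  shows "int_poly_eval p v = (\<Sum>m\<in>K. of_int (Poly_Mapping.lookup p m) * mon m v)"
  unfolding eval_mon using assms
  by (intro sum.mono_neutral_left) (auto simp: in_keys_iff)

lemma eval_add: "int_poly_eval (p + q) v = int_poly_eval p v + int_poly_eval q v"
proof -
  let ?K = "Poly_Mapping.keys p \<union> Poly_Mapping.keys q"
  have f: "finite ?K" by simp
  have "int_poly_eval (p + q) v = (\<Sum>m\<in>?K. of_int (Poly_Mapping.lookup (p+q) m) * mon m v)"
    by (rule eval_superset[OF f]) (rule keys_add)
  also have "\<dots> = (\<Sum>m\<in>?K. of_int (Poly_Mapping.lookup p m) * mon m v + of_int (Poly_Mapping.lookup q m) * mon m v)"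
    by (simp add: lookup_add distrib_right)
  also have "\<dots> = int_poly_eval p v + int_poly_eval q v"
    by (simp add: sum.distrib eval_superset[OF f])
  finally show ?thesis .
qed

lemma eval_uminus: "int_poly_eval (- p) v = - int_poly_eval p v"
  by (simp add: eval_mon sum_negf)

lemma eval_diff: "int_poly_eval (p - q) v = int_poly_eval p v - int_poly_eval q v"
  unfolding diff_conv_add_uminus eval_add eval_uminus by simp

lemma eval_zero: "int_poly_eval 0 v = 0"
  by (simp add: eval_mon)

lemma eval_single: "int_poly_eval (Poly_Mapping.single a b) v = of_int b * mon a v"
  by (simp add: eval_mon)

lemma eval_one: "int_poly_eval 1 v = 1"
  by (simp add: int_poly_eval_def lookup_one)

lemma update_eq: "a \<notin> Poly_Mapping.keys f \<Longrightarrow> Poly_Mapping.update a b f = f + Poly_Mapping.single a b"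
  by (rule poly_mapping_eqI) (auto simp: lookup_update lookup_add lookup_single in_keys_iff when_def)

lemma eval_mult_single:
  "int_poly_eval (Poly_Mapping.single a b * q) v = of_int b * mon a v * int_poly_eval q v"
proof (induction q rule: update_induct)
  case const
  then show ?case by (simp add: eval_zero)
next
  case (update f c d)
  have e: "Poly_Mapping.update c d f = f + Poly_Mapping.single c d" using update_eq[OF update(1)] .
  have "int_poly_eval (Poly_Mapping.single a b * Poly_Mapping.update c d f) v
      = int_poly_eval (Poly_Mapping.single a b * f) v + int_poly_eval (Poly_Mapping.single (a + c) (b * d)) v"
    unfolding e distrib_left mult_single eval_add ..
  also have "\<dots> = of_int b * mon a v * int_poly_eval f v + of_int b * mon a v * (of_int d * mon c v)"
    unfolding update(3) eval_single mon_add by simp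
  also have "\<dots> = of_int b * mon a v * int_poly_eval (Poly_Mapping.update c d f) v"
    unfolding e eval_add eval_single by (simp add: distrib_left)
  finally show ?case .
qed

lemma eval_mult: "int_poly_eval (p * q) v = int_poly_eval p v * int_poly_eval q v"
proof (induction p rule: update_induct)
  case const
  then show ?case by (simp add: eval_zero)
next
  case (update f c d)
  have e: "Poly_Mapping.update c d f = f + Poly_Mapping.single c d" using update_eq[OF update(1)] .
  show ?case
    unfolding e distrib_right eval_add eval_mult_single update(3) eval_single by simp
qed

definition bnd :: "nat set \<Rightarrow> ((nat \<Rightarrow>\<^sub>0 nat) \<Rightarrow>\<^sub>0 int) \<Rightarrow> bool" where
  "bnd I p \<longleftrightarrow> (\<forall>m\<in>Poly_Mapping.keys p. Poly_Mapping.keys m \<subseteq> I)"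

lemma bnd_add: "bnd I p \<Longrightarrow> bnd I q \<Longrightarrow> bnd I (p + q)"
  unfolding bnd_def using keys_add[of p q] by blast

lemma bnd_uminus: "bnd I (- p) = bnd I p"
  unfolding bnd_def by simp

lemma bnd_diff: "bnd I p \<Longrightarrow> bnd I q \<Longrightarrow> bnd I (p - q)"
  unfolding diff_conv_add_uminus by (rule bnd_add) (simp_all add: bnd_uminus)

lemma bnd_mult: "bnd I p \<Longrightarrow> bnd I q \<Longrightarrow> bnd I (p * q)"
  unfolding bnd_def
proof
  fix m assume p: "\<forall>m\<in>Poly_Mapping.keys p. Poly_Mapping.keys m \<subseteq> I"
    and q: "\<forall>m\<in>Poly_Mapping.keys q. Poly_Mapping.keys m \<subseteq> I"
    and m: "m \<in> Poly_Mapping.keys (p * q)"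
  then obtain a b where "m = a + b" "a \<in> Poly_Mapping.keys p" "b \<in> Poly_Mapping.keys q"
    using keys_mult[of p q] by blast
  then show "Poly_Mapping.keys m \<subseteq> I" using p q keys_add[of a b] by blast
qed

lemma bnd_one: "bnd I 1"
  unfolding bnd_def by simp

lemma bnd_var: "i \<in> I \<Longrightarrow> bnd I (Poly_Mapping.single (Poly_Mapping.single i 1) 1)"
  unfolding bnd_def by simp

definition RelP :: "nat set \<Rightarrow> (nat \<Rightarrow> 'a::field) \<Rightarrow> 'a \<Rightarrow> rat \<Rightarrow> bool" where
  "RelP I x y s \<longleftrightarrow> (\<exists>p q. bnd I p \<and> bnd I q \<and> int_poly_eval q (\<lambda>_. 1::rat) \<noteq> 0 \<and>
      y * int_poly_eval q x = int_poly_eval p x \<and>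
      s * int_poly_eval q (\<lambda>_. 1::rat) = int_poly_eval p (\<lambda>_. 1::rat))"

lemma indep_zero: "alg_indep I x \<Longrightarrow> bnd I q \<Longrightarrow> int_poly_eval q x = 0 \<Longrightarrow> q = 0"
  unfolding alg_indep_def bnd_def by blast

lemma RelP_one: "RelP I x 1 1"
  unfolding RelP_def by (rule exI[of _ 1], rule exI[of _ 1]) (simp add: bnd_one eval_one)

lemma mon_var: "mon (Poly_Mapping.single i 1) v = v i"
  by (simp add: mon_def)

lemma RelP_var: "i \<in> I \<Longrightarrow> RelP I x (x i) 1"
  unfolding RelP_def
proof (intro exI conjI)
  assume i: "i \<in> I"
  show "bnd I (Poly_Mapping.single (Poly_Mapping.single i 1) 1)" using i by (rule bnd_var)
  show "bnd I 1" by (rule bnd_one)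
  show "int_poly_eval 1 (\<lambda>_. 1::rat) \<noteq> 0" unfolding eval_one by simp
  show "x i * int_poly_eval 1 x = int_poly_eval (Poly_Mapping.single (Poly_Mapping.single i 1) 1) x"
    unfolding eval_one eval_single mon_var by simp
  show "1 * int_poly_eval 1 (\<lambda>_. 1::rat) = int_poly_eval (Poly_Mapping.single (Poly_Mapping.single i 1) 1) (\<lambda>_. 1::rat)"
    unfolding eval_one eval_single mon_var by simp
qed

lemma RelP_add: "RelP I x y s \<Longrightarrow> RelP I x y' s' \<Longrightarrow> RelP I x (y + y') (s + s')"
proof -
  assume "RelP I x y s" "RelP I x y' s'"
  then obtain p q p' q' where h: "bnd I p" "bnd I q" "int_poly_eval q (\<lambda>_. 1::rat) \<noteq> 0"
      "y * int_poly_eval q x = int_poly_eval p x"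
      "s * int_poly_eval q (\<lambda>_. 1::rat) = int_poly_eval p (\<lambda>_. 1::rat)"
    and h': "bnd I p'" "bnd I q'" "int_poly_eval q' (\<lambda>_. 1::rat) \<noteq> 0"
      "y' * int_poly_eval q' x = int_poly_eval p' x"
      "s' * int_poly_eval q' (\<lambda>_. 1::rat) = int_poly_eval p' (\<lambda>_. 1::rat)"
    unfolding RelP_def by blast
  show ?thesis unfolding RelP_def
  proof (intro exI conjI)
    show "bnd I (p * q' + p' * q)" by (intro bnd_add bnd_mult h h')
    show "bnd I (q * q')" by (intro bnd_mult h h')
    show "int_poly_eval (q * q') (\<lambda>_. 1::rat) \<noteq> 0" using h(3) h'(3) by (simp add: eval_mult)
    have "(y + y') * int_poly_eval (q * q') x = (y * int_poly_eval q x) * int_poly_eval q' x + (y' * int_poly_eval q' x) * int_poly_eval q x"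
      by (simp add: eval_mult algebra_simps)
    then show "(y + y') * int_poly_eval (q * q') x = int_poly_eval (p * q' + p' * q) x"
      using h(4) h'(4) by (simp add: eval_mult eval_add)
    have "(s + s') * int_poly_eval (q * q') (\<lambda>_. 1::rat) = (s * int_poly_eval q (\<lambda>_. 1::rat)) * int_poly_eval q' (\<lambda>_. 1::rat) + (s' * int_poly_eval q' (\<lambda>_. 1::rat)) * int_poly_eval q (\<lambda>_. 1::rat)"
      by (simp add: eval_mult algebra_simps)
    then show "(s + s') * int_poly_eval (q * q') (\<lambda>_. 1::rat) = int_poly_eval (p * q' + p' * q) (\<lambda>_. 1::rat)"
      using h(5) h'(5) by (simp add: eval_mult eval_add)
  qed
qed

lemma RelP_mult: "RelP I x y s \<Longrightarrow> RelP I x y' s' \<Longrightarrow> RelP I x (y * y') (s * s')"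
proof -
  assume "RelP I x y s" "RelP I x y' s'"
  then obtain p q p' q' where h: "bnd I p" "bnd I q" "int_poly_eval q (\<lambda>_. 1::rat) \<noteq> 0"
      "y * int_poly_eval q x = int_poly_eval p x"
      "s * int_poly_eval q (\<lambda>_. 1::rat) = int_poly_eval p (\<lambda>_. 1::rat)"
    and h': "bnd I p'" "bnd I q'" "int_poly_eval q' (\<lambda>_. 1::rat) \<noteq> 0"
      "y' * int_poly_eval q' x = int_poly_eval p' x"
      "s' * int_poly_eval q' (\<lambda>_. 1::rat) = int_poly_eval p' (\<lambda>_. 1::rat)"
    unfolding RelP_def by blast
  show ?thesis unfolding RelP_def
  proof (intro exI conjI)
    show "bnd I (p * p')" by (intro bnd_mult h h')
    show "bnd I (q * q')" by (intro bnd_mult h h')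
    show "int_poly_eval (q * q') (\<lambda>_. 1::rat) \<noteq> 0" using h(3) h'(3) by (simp add: eval_mult)
    have "(y * y') * int_poly_eval (q * q') x = (y * int_poly_eval q x) * (y' * int_poly_eval q' x)"
      by (simp add: eval_mult ac_simps)
    then show "(y * y') * int_poly_eval (q * q') x = int_poly_eval (p * p') x"
      using h(4) h'(4) by (simp add: eval_mult)
    have "(s * s') * int_poly_eval (q * q') (\<lambda>_. 1::rat) = (s * int_poly_eval q (\<lambda>_. 1::rat)) * (s' * int_poly_eval q' (\<lambda>_. 1::rat))"
      by (simp add: eval_mult ac_simps)
    then show "(s * s') * int_poly_eval (q * q') (\<lambda>_. 1::rat) = int_poly_eval (p * p') (\<lambda>_. 1::rat)"
      using h(5) h'(5) by (simp add: eval_mult)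
  qed
qed

lemma RelP_nz: "alg_indep I x \<Longrightarrow> RelP I x y s \<Longrightarrow> s \<noteq> 0 \<Longrightarrow> y \<noteq> 0"
proof -
  assume ind: "alg_indep I x" and "RelP I x y s" and s: "s \<noteq> 0"
  then obtain p q where h: "bnd I p" "bnd I q" "int_poly_eval q (\<lambda>_. 1::rat) \<noteq> 0"
      "y * int_poly_eval q x = int_poly_eval p x"
      "s * int_poly_eval q (\<lambda>_. 1::rat) = int_poly_eval p (\<lambda>_. 1::rat)"
    unfolding RelP_def by blast
  have "int_poly_eval p (\<lambda>_. 1::rat) \<noteq> 0" using h(3,5) s by (metis mult_eq_0_iff)
  then have "p \<noteq> 0" by (auto simp: eval_zero)
  then have "int_poly_eval p x \<noteq> 0" using indep_zero[OF ind h(1)] by blast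
  then show "y \<noteq> 0" using h(4) by auto
qed

lemma RelP_div: "alg_indep I x \<Longrightarrow> RelP I x y s \<Longrightarrow> RelP I x y' s' \<Longrightarrow> s' \<noteq> 0 \<Longrightarrow> RelP I x (y / y') (s / s')"
proof -
  assume ind: "alg_indep I x" and r: "RelP I x y s" and r': "RelP I x y' s'" and s': "s' \<noteq> 0"
  have y': "y' \<noteq> 0" by (rule RelP_nz[OF ind r' s'])
  from r r' obtain p q p' q' where h: "bnd I p" "bnd I q" "int_poly_eval q (\<lambda>_. 1::rat) \<noteq> 0"
      "y * int_poly_eval q x = int_poly_eval p x"
      "s * int_poly_eval q (\<lambda>_. 1::rat) = int_poly_eval p (\<lambda>_. 1::rat)"
    and h': "bnd I p'" "bnd I q'" "int_poly_eval q' (\<lambda>_. 1::rat) \<noteq> 0"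
      "y' * int_poly_eval q' x = int_poly_eval p' x"
      "s' * int_poly_eval q' (\<lambda>_. 1::rat) = int_poly_eval p' (\<lambda>_. 1::rat)"
    unfolding RelP_def by blast
  show ?thesis unfolding RelP_def
  proof (intro exI conjI)
    show "bnd I (p * q')" by (intro bnd_mult h h')
    show "bnd I (q * p')" by (intro bnd_mult h h')
    have "int_poly_eval p' (\<lambda>_. 1::rat) \<noteq> 0" using h'(3,5) s' by (metis mult_eq_0_iff)
    then show "int_poly_eval (q * p') (\<lambda>_. 1::rat) \<noteq> 0" using h(3) by (simp add: eval_mult)
    have "(y / y') * int_poly_eval (q * p') x = (y / y') * int_poly_eval q x * (y' * int_poly_eval q' x)"
      using h'(4) by (simp add: eval_mult ac_simps)
    also have "\<dots> = (y * int_poly_eval q x) * int_poly_eval q' x" using y' by (simp add: field_simps)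
    finally show "(y / y') * int_poly_eval (q * p') x = int_poly_eval (p * q') x"
      using h(4) by (simp add: eval_mult)
    have "(s / s') * int_poly_eval (q * p') (\<lambda>_. 1::rat) = (s / s') * int_poly_eval q (\<lambda>_. 1::rat) * (s' * int_poly_eval q' (\<lambda>_. 1::rat))"
      using h'(5) by (simp add: eval_mult ac_simps)
    also have "\<dots> = (s * int_poly_eval q (\<lambda>_. 1::rat)) * int_poly_eval q' (\<lambda>_. 1::rat)" using s' by (simp add: field_simps)
    finally show "(s / s') * int_poly_eval (q * p') (\<lambda>_. 1::rat) = int_poly_eval (p * q') (\<lambda>_. 1::rat)"
      using h(5) by (simp add: eval_mult)
  qed
qed

lemma RelP_fun: "alg_indep I x \<Longrightarrow> RelP I x y s \<Longrightarrow> RelP I x y s' \<Longrightarrow> s = s'"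
proof -
  assume ind: "alg_indep I x" and r: "RelP I x y s" and r': "RelP I x y s'"
  from r r' obtain p q p' q' where h: "bnd I p" "bnd I q" "int_poly_eval q (\<lambda>_. 1::rat) \<noteq> 0"
      "y * int_poly_eval q x = int_poly_eval p x"
      "s * int_poly_eval q (\<lambda>_. 1::rat) = int_poly_eval p (\<lambda>_. 1::rat)"
    and h': "bnd I p'" "bnd I q'" "int_poly_eval q' (\<lambda>_. 1::rat) \<noteq> 0"
      "y * int_poly_eval q' x = int_poly_eval p' x"
      "s' * int_poly_eval q' (\<lambda>_. 1::rat) = int_poly_eval p' (\<lambda>_. 1::rat)"
    unfolding RelP_def by blast
  have "int_poly_eval (p * q' - p' * q) x = (y * int_poly_eval q x) * int_poly_eval q' x - (y * int_poly_eval q' x) * int_poly_eval q x"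
    using h(4) h'(4) by (simp add: eval_mult eval_diff)
  also have "\<dots> = 0" by (simp add: ac_simps)
  finally have "p * q' - p' * q = 0"
    using indep_zero[OF ind bnd_diff[OF bnd_mult[OF h(1) h'(2)] bnd_mult[OF h'(1) h(2)]]] by blast
  then have "int_poly_eval (p * q' - p' * q) (\<lambda>_. 1::rat) = 0" by (simp add: eval_zero)
  then have "(s * int_poly_eval q (\<lambda>_. 1::rat)) * int_poly_eval q' (\<lambda>_. 1::rat) = (s' * int_poly_eval q' (\<lambda>_. 1::rat)) * int_poly_eval q (\<lambda>_. 1::rat)"
    using h(5) h'(5) by (simp add: eval_mult eval_diff)
  then have "(s - s') * (int_poly_eval q (\<lambda>_. 1::rat) * int_poly_eval q' (\<lambda>_. 1::rat)) = 0"
    by (simp add: algebra_simps)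
  then show "s = s'" using h(3) h'(3) by simp
qed

lemma S_sym:
  fixes S :: "nat \<Rightarrow> int \<Rightarrow> rat"
  assumes pos: "\<And>\<alpha> n. \<alpha> \<le> r + 1 \<Longrightarrow> S \<alpha> n > 0"
    and Qs: "\<And>\<alpha> n. \<alpha> \<in> {1..r} \<Longrightarrow> S \<alpha> (n + 1) * S \<alpha> (n - 1) = (S \<alpha> n)^2 + S (\<alpha> + 1) n * S (\<alpha> - 1) n"
    and bd: "\<And>n. S 0 n = 1" "\<And>n. S (r + 1) n = 1"
    and init: "\<And>\<alpha>. \<alpha> \<in> {1..r} \<Longrightarrow> S \<alpha> 0 = S \<alpha> 1"
  shows "\<forall>\<alpha>\<le>r+1. S \<alpha> (int k) = S \<alpha> (1 - int k) \<and> S \<alpha> (int k + 1) = S \<alpha> (- int k)"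
proof (induction k)
  case 0
  show ?case
  proof (intro allI impI)
    fix \<alpha> :: nat assume a: "\<alpha> \<le> r + 1"
    show "S \<alpha> (int 0) = S \<alpha> (1 - int 0) \<and> S \<alpha> (int 0 + 1) = S \<alpha> (- int 0)"
    proof (cases "\<alpha> = 0 \<or> \<alpha> = r + 1")
      case True then show ?thesis using bd by auto
    next
      case False then have "\<alpha> \<in> {1..r}" using a by auto
      then show ?thesis using init by simp
    qed
  qed
next
  case (Suc k)
  show ?case
  proof (intro allI impI)
    fix \<alpha> :: nat assume a: "\<alpha> \<le> r + 1"
    have h1: "S \<alpha> (int (Suc k)) = S \<alpha> (1 - int (Suc k))"
    proof -
      have "int (Suc k) = int k + 1" "1 - int (Suc k) = - int k" by simp_all
      then show ?thesis using Suc.IH a by metis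
    qed
    have h2: "S \<alpha> (int (Suc k) + 1) = S \<alpha> (- int (Suc k))"
    proof (cases "\<alpha> = 0 \<or> \<alpha> = r + 1")
      case True then show ?thesis using bd by auto
    next
      case False then have ar: "\<alpha> \<in> {1..r}" using a by auto
      have q1: "S \<alpha> (int k + 2) * S \<alpha> (int k) = (S \<alpha> (int k + 1))^2 + S (\<alpha> + 1) (int k + 1) * S (\<alpha> - 1) (int k + 1)"
        using Qs[OF ar, of "int k + 1"] by (simp add: add.assoc)
      have q2: "S \<alpha> (1 - int k) * S \<alpha> (- int k - 1) = (S \<alpha> (- int k))^2 + S (\<alpha> + 1) (- int k) * S (\<alpha> - 1) (- int k)"
        using Qs[OF ar, of "- int k"] by (simp add: algebra_simps)
      have e1: "S \<alpha> (1 - int k) = S \<alpha> (int k)" using Suc a by simp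
      have e2: "\<And>\<beta>. \<beta> \<le> r + 1 \<Longrightarrow> S \<beta> (- int k) = S \<beta> (int k + 1)" using Suc by simp
      have "S \<alpha> (int k + 2) * S \<alpha> (int k) = S \<alpha> (- int k - 1) * S \<alpha> (int k)"
        using q1 q2 e1 e2[of \<alpha>] e2[of "\<alpha>+1"] e2[of "\<alpha>-1"] a ar by (simp add: ac_simps)
      then have "S \<alpha> (int k + 2) = S \<alpha> (- int k - 1)" using pos[OF a, of "int k"] by simp
      moreover have "int (Suc k) + 1 = int k + 2" "- int (Suc k) = - int k - 1" by simp_all
      ultimately show ?thesis by metis
    qed
    show "S \<alpha> (int (Suc k)) = S \<alpha> (1 - int (Suc k)) \<and> S \<alpha> (int (Suc k) + 1) = S \<alpha> (- int (Suc k))"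
      using h1 h2 by blast
  qed
qed

lemma S_inj:
  fixes S :: "nat \<Rightarrow> int \<Rightarrow> rat"
  assumes pos: "\<And>\<alpha> n. \<alpha> \<le> r + 1 \<Longrightarrow> S \<alpha> n > 0"
    and Qs: "\<And>\<alpha> n. \<alpha> \<in> {1..r} \<Longrightarrow> S \<alpha> (n + 1) * S \<alpha> (n - 1) = (S \<alpha> n)^2 + S (\<alpha> + 1) n * S (\<alpha> - 1) n"
    and bd: "\<And>n. S 0 n = 1" "\<And>n. S (r + 1) n = 1"
    and init: "\<And>\<alpha>. \<alpha> \<in> {1..r} \<Longrightarrow> S \<alpha> 0 = S \<alpha> 1"
    and ar: "\<alpha> \<in> {1..r}"
    and eq: "S \<alpha> a = S \<alpha> b"
    and ev: "even (a - b)"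
  shows "a = b"
proof -
  have ar1: "\<alpha> \<le> r + 1" using ar by auto
  have sym: "S \<alpha> n = S \<alpha> (1 - n)" for n
  proof (cases "n \<ge> 0")
    case True
    define k where "k = nat n"
    have "n = int k" using True unfolding k_def by simp
    then show ?thesis using S_sym[OF pos Qs bd init, of k] ar1 by blast
  next
    case False
    define k where "k = nat (1 - n)"
    have k: "1 - n = int k" using False unfolding k_def by simp
    have "S \<alpha> (int k) = S \<alpha> (1 - int k)" using S_sym[OF pos Qs bd init, of k] ar1 by blast
    moreover have "n = 1 - int k" using k by simp
    ultimately show ?thesis by simp
  qed
  have step: "S \<alpha> (n + 1) < S \<alpha> (n + 2)" if w: "S \<alpha> n \<le> S \<alpha> (n + 1)" for n
  proof -
    have q: "S \<alpha> (n + 2) * S \<alpha> n = (S \<alpha> (n + 1))^2 + S (\<alpha> + 1) (n + 1) * S (\<alpha> - 1) (n + 1)"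
      using Qs[OF ar, of "n + 1"] by (simp add: add.assoc)
    have p1: "S (\<alpha> + 1) (n + 1) * S (\<alpha> - 1) (n + 1) > 0"
    proof -
      have "\<alpha> + 1 \<le> r + 1" "\<alpha> - 1 \<le> r + 1" using ar by auto
      then show ?thesis using pos by (simp add: mult_pos_pos)
    qed
    have "(S \<alpha> (n + 1))^2 \<ge> S \<alpha> (n + 1) * S \<alpha> n"
      unfolding power2_eq_square using w pos[OF ar1] by (simp add: mult_left_mono)
    then have "S \<alpha> (n + 2) * S \<alpha> n > S \<alpha> (n + 1) * S \<alpha> n" using q p1 by linarith
    then show ?thesis using pos[OF ar1, of n] by simp
  qed
  have weak: "S \<alpha> (int k) \<le> S \<alpha> (int k + 1)" for k
  proof (induction k)
    case 0 then show ?case using init[OF ar] by simp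
  next
    case (Suc k)
    have "S \<alpha> (int k + 1) < S \<alpha> (int k + 2)" by (rule step[OF Suc.IH])
    moreover have "int (Suc k) = int k + 1" "int (Suc k) + 1 = int k + 2" by simp_all
    ultimately show ?case by (metis less_imp_le)
  qed
  have strict1: "S \<alpha> c < S \<alpha> (c + 1)" if "c \<ge> 1" for c
  proof -
    define k where "k = nat (c - 1)"
    have k: "c = int k + 1" using that unfolding k_def by simp
    show ?thesis using step[OF weak[of k]] k by (simp add: add.assoc)
  qed
  have mono: "S \<alpha> c < S \<alpha> (c + int d + 1)" if "c \<ge> 1" for c d
  proof (induction d)
    case 0 then show ?case using strict1[OF that] by simp
  next
    case (Suc d)
    have "c + int d + 1 \<ge> 1" using that by simp
    then have "S \<alpha> (c + int d + 1) < S \<alpha> (c + int d + 1 + 1)" by (rule strict1)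
    moreover have "c + int (Suc d) + 1 = c + int d + 1 + 1" by simp
    ultimately show ?case using Suc.IH by (metis order.strict_trans)
  qed
  have mono2: "S \<alpha> c < S \<alpha> e" if "c \<ge> 1" "c < e" for c e
  proof -
    have "e = c + int (nat (e - c - 1)) + 1" using that by simp
    then show ?thesis using mono[OF that(1), of "nat (e - c - 1)"] by simp
  qed
  define f where "f c = (if c \<ge> 1 then c else 1 - c)" for c :: int
  have f1: "f c \<ge> 1" for c unfolding f_def by simp
  have fS: "S \<alpha> (f c) = S \<alpha> c" for c unfolding f_def using sym[of c] by simp
  have "f a = f b"
  proof (rule ccontr)
    assume "f a \<noteq> f b"
    then consider "f a < f b" | "f b < f a" by linarith
    then show False
    proof cases
      case 1 then show False using mono2[OF f1 1] fS[of a] fS[of b] eq by simp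
    next
      case 2 then show False using mono2[OF f1 2] fS[of a] fS[of b] eq by simp
    qed
  qed
  then show "a = b" using ev unfolding f_def by (auto split: if_splits; presburger)
qed

lemma R_inj:
  fixes R :: "nat \<Rightarrow> int \<Rightarrow> 'a::field"
  assumes Q: "is_Q_system r R" and indep: "alg_indep {1..2*r} (motzkin_cluster r R (\<lambda>_. 0))"
    and ar: "\<alpha> \<in> {1..r}" and eq: "R \<alpha> a = R \<alpha> b" and ev: "even (a - b)"
  shows "a = b"
proof -
  define I where "I = {1..2*r}"
  define x where "x = motzkin_cluster r R (\<lambda>_. 0)"
  have ind: "alg_indep I x" using indep unfolding I_def x_def .
  have Qf: "R \<beta> (n + 1) * R \<beta> (n - 1) = (R \<beta> n)^2 + R (\<beta> + 1) n * R (\<beta> - 1) n"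
    if "\<beta> \<in> {1..r}" for \<beta> n using Q that unfolding is_Q_system_def by blast
  have bd0: "R 0 n = 1" and bd1: "R (r + 1) n = 1" for n using Q unfolding is_Q_system_def by auto
  have xv: "x \<beta> = R \<beta> 0 \<and> x (\<beta> + r) = R \<beta> 1" if "\<beta> \<in> {1..r}" for \<beta>
    using that unfolding x_def motzkin_cluster_def by auto
  have init: "RelP I x (R \<beta> 0) 1 \<and> RelP I x (R \<beta> 1) 1" if b: "\<beta> \<in> {1..r}" for \<beta>
  proof -
    have "\<beta> \<in> I" "\<beta> + r \<in> I" using b unfolding I_def by auto
    then show ?thesis using RelP_var[of \<beta> I x] RelP_var[of "\<beta> + r" I x] xv[OF b] by simp
  qed
  have bdr: "RelP I x (R \<beta> n) 1" if "\<beta> = 0 \<or> \<beta> = r + 1" for \<beta> n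
    using that bd0 bd1 RelP_one by auto
  have new: "\<exists>s>0. RelP I x ((R \<beta> m * R \<beta> m + R (\<beta> + 1) m * R (\<beta> - 1) m) / R \<beta> m') s"
    if b: "\<beta> \<in> {1..r}" and h0: "\<exists>s>0. RelP I x (R \<beta> m') s"
      and h1: "\<forall>\<gamma>\<le>r+1. \<exists>s>0. RelP I x (R \<gamma> m) s" for \<beta> m m'
  proof -
    obtain s0 where s0: "s0 > 0" "RelP I x (R \<beta> m') s0" using h0 by blast
    have bb: "\<beta> \<le> r + 1" "\<beta> + 1 \<le> r + 1" "\<beta> - 1 \<le> r + 1" using b by auto
    obtain s1 where s1: "s1 > 0" "RelP I x (R \<beta> m) s1" using h1[rule_format, OF bb(1)] by blast
    obtain sa where sa: "sa > 0" "RelP I x (R (\<beta> + 1) m) sa" using h1[rule_format, OF bb(2)] by blast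
    obtain sb where sb: "sb > 0" "RelP I x (R (\<beta> - 1) m) sb" using h1[rule_format, OF bb(3)] by blast
    have "RelP I x ((R \<beta> m * R \<beta> m + R (\<beta> + 1) m * R (\<beta> - 1) m) / R \<beta> m') ((s1 * s1 + sa * sb) / s0)"
      by (intro RelP_div[OF ind] RelP_add RelP_mult s1 sa sb s0) (use s0 in simp)
    moreover have "(s1 * s1 + sa * sb) / s0 > 0" using s0 s1 sa sb by (simp add: add_pos_pos)
    ultimately show ?thesis by blast
  qed
  define G where "G n = (\<forall>\<gamma>\<le>r+1. (\<exists>s>0. RelP I x (R \<gamma> n) s) \<and> (\<exists>s>0. RelP I x (R \<gamma> (n + 1)) s))" for n
  have G: "G n" for n
  proof (induction n rule: int_induct[where k = 0])
    case base
    show ?case unfolding G_def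
    proof (intro allI impI conjI)
      fix \<gamma> :: nat assume "\<gamma> \<le> r + 1"
      then have "\<gamma> = 0 \<or> \<gamma> = r + 1 \<or> \<gamma> \<in> {1..r}" by auto
      then show "\<exists>s>0. RelP I x (R \<gamma> 0) s" "\<exists>s>0. RelP I x (R \<gamma> (0 + 1)) s"
        using bdr init by (auto intro!: exI[of _ 1])
    qed
  next
    case (step1 n)
    show ?case unfolding G_def
    proof (intro allI impI conjI)
      fix \<gamma> :: nat assume g: "\<gamma> \<le> r + 1"
      show "\<exists>s>0. RelP I x (R \<gamma> (n + 1)) s" using step1(2) g unfolding G_def by blast
      show "\<exists>s>0. RelP I x (R \<gamma> (n + 1 + 1)) s"
      proof (cases "\<gamma> = 0 \<or> \<gamma> = r + 1")
        case True then show ?thesis using bdr by (auto intro!: exI[of _ 1])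
      next
        case False
        then have gr: "\<gamma> \<in> {1..r}" using g by auto
        have h0: "\<exists>s>0. RelP I x (R \<gamma> n) s" using step1(2) g unfolding G_def by blast
        have h1: "\<forall>\<gamma>\<le>r+1. \<exists>s>0. RelP I x (R \<gamma> (n + 1)) s" using step1(2) unfolding G_def by blast
        obtain s0 where "s0 > 0" "RelP I x (R \<gamma> n) s0" using h0 by blast
        then have nz: "R \<gamma> n \<noteq> 0" using RelP_nz[OF ind] by force
        have "R \<gamma> (n + 1 + 1) * R \<gamma> n = R \<gamma> (n + 1) * R \<gamma> (n + 1) + R (\<gamma> + 1) (n + 1) * R (\<gamma> - 1) (n + 1)"
          using Qf[OF gr, of "n + 1"] by (simp add: power2_eq_square)
        then have "R \<gamma> (n + 1 + 1) = (R \<gamma> (n + 1) * R \<gamma> (n + 1) + R (\<gamma> + 1) (n + 1) * R (\<gamma> - 1) (n + 1)) / R \<gamma> n"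
          using nz by (simp add: field_simps)
        then show ?thesis using new[OF gr h0 h1] by simp
      qed
    qed
  next
    case (step2 n)
    show ?case unfolding G_def
    proof (intro allI impI conjI)
      fix \<gamma> :: nat assume g: "\<gamma> \<le> r + 1"
      show "\<exists>s>0. RelP I x (R \<gamma> (n - 1 + 1)) s" using step2(2) g unfolding G_def by simp
      show "\<exists>s>0. RelP I x (R \<gamma> (n - 1)) s"
      proof (cases "\<gamma> = 0 \<or> \<gamma> = r + 1")
        case True then show ?thesis using bdr by (auto intro!: exI[of _ 1])
      next
        case False
        then have gr: "\<gamma> \<in> {1..r}" using g by auto
        have h0: "\<exists>s>0. RelP I x (R \<gamma> (n + 1)) s" using step2(2) g unfolding G_def by blast
        have h1: "\<forall>\<gamma>\<le>r+1. \<exists>s>0. RelP I x (R \<gamma> n) s" using step2(2) unfolding G_def by blast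
        obtain s0 where "s0 > 0" "RelP I x (R \<gamma> (n + 1)) s0" using h0 by blast
        then have nz: "R \<gamma> (n + 1) \<noteq> 0" using RelP_nz[OF ind] by force
        have "R \<gamma> (n - 1) * R \<gamma> (n + 1) = R \<gamma> n * R \<gamma> n + R (\<gamma> + 1) n * R (\<gamma> - 1) n"
          using Qf[OF gr, of n] by (simp add: power2_eq_square mult.commute)
        then have "R \<gamma> (n - 1) = (R \<gamma> n * R \<gamma> n + R (\<gamma> + 1) n * R (\<gamma> - 1) n) / R \<gamma> (n + 1)"
          using nz by (simp add: field_simps)
        then show ?thesis using new[OF gr h0 h1] by simp
      qed
    qed
  qed
  have ex: "\<exists>s>0. RelP I x (R \<gamma> n) s" if "\<gamma> \<le> r + 1" for \<gamma> n
    using G[of n] that unfolding G_def by blast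
  define S where "S \<gamma> n = (THE s. RelP I x (R \<gamma> n) s)" for \<gamma> n
  have SR: "RelP I x (R \<gamma> n) (S \<gamma> n) \<and> S \<gamma> n > 0" if g: "\<gamma> \<le> r + 1" for \<gamma> n
  proof -
    obtain s where s: "s > 0" "RelP I x (R \<gamma> n) s" using ex[OF g] by blast
    have "S \<gamma> n = s" unfolding S_def
      by (rule the_equality[where P = "\<lambda>s. RelP I x (R \<gamma> n) s", OF s(2)]) (use RelP_fun[OF ind] s(2) in blast)
    then show ?thesis using s by simp
  qed
  have pos: "\<And>\<gamma> n. \<gamma> \<le> r + 1 \<Longrightarrow> S \<gamma> n > 0" using SR by blast
  have sbd0: "S 0 n = 1" for n
    using RelP_fun[OF ind, of "R 0 n" "S 0 n" 1] SR[of 0 n] bdr[of 0 n] by simp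
  have sbd1: "S (r + 1) n = 1" for n
    using RelP_fun[OF ind, of "R (r+1) n" "S (r+1) n" 1] SR[of "r+1" n] bdr[of "r+1" n] by simp
  have sinit: "S \<gamma> 0 = S \<gamma> 1" if g: "\<gamma> \<in> {1..r}" for \<gamma>
  proof -
    have g1: "\<gamma> \<le> r + 1" using g by auto
    have "S \<gamma> 0 = 1" using RelP_fun[OF ind, of "R \<gamma> 0" "S \<gamma> 0" 1] SR[OF g1, of 0] init[OF g] by simp
    moreover have "S \<gamma> 1 = 1" using RelP_fun[OF ind, of "R \<gamma> 1" "S \<gamma> 1" 1] SR[OF g1, of 1] init[OF g] by simp
    ultimately show ?thesis by simp
  qed
  have sQ: "S \<gamma> (n + 1) * S \<gamma> (n - 1) = (S \<gamma> n)^2 + S (\<gamma> + 1) n * S (\<gamma> - 1) n"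
    if g: "\<gamma> \<in> {1..r}" for \<gamma> n
  proof -
    have g1: "\<gamma> \<le> r + 1" "\<gamma> + 1 \<le> r + 1" "\<gamma> - 1 \<le> r + 1" using g by auto
    have r1: "RelP I x (R \<gamma> (n + 1) * R \<gamma> (n - 1)) (S \<gamma> (n + 1) * S \<gamma> (n - 1))"
      using SR[OF g1(1)] by (intro RelP_mult) auto
    have r2: "RelP I x (R \<gamma> n * R \<gamma> n + R (\<gamma> + 1) n * R (\<gamma> - 1) n) (S \<gamma> n * S \<gamma> n + S (\<gamma> + 1) n * S (\<gamma> - 1) n)"
      using SR[OF g1(1)] SR[OF g1(2)] SR[OF g1(3)] by (intro RelP_mult RelP_add) auto
    have "R \<gamma> (n + 1) * R \<gamma> (n - 1) = R \<gamma> n * R \<gamma> n + R (\<gamma> + 1) n * R (\<gamma> - 1) n"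
      using Qf[OF g, of n] by (simp add: power2_eq_square)
    then have "S \<gamma> (n + 1) * S \<gamma> (n - 1) = S \<gamma> n * S \<gamma> n + S (\<gamma> + 1) n * S (\<gamma> - 1) n"
      using RelP_fun[OF ind] r1 r2 by metis
    then show ?thesis by (simp add: power2_eq_square)
  qed
  have a1: "\<alpha> \<le> r + 1" using ar by auto
  have "S \<alpha> a = S \<alpha> b"
    using RelP_fun[OF ind, of "R \<alpha> b" "S \<alpha> a" "S \<alpha> b"] SR[OF a1, of a] SR[OF a1, of b] eq by simp
  then show "a = b"
    using S_inj[of r S \<alpha> a b] pos sQ sbd0 sbd1 sinit ar ev by blast
qed

definition Bg :: "nat \<Rightarrow> (nat \<Rightarrow> int) \<Rightarrow> (nat \<Rightarrow> int) \<Rightarrow> nat \<Rightarrow> nat \<Rightarrow> int" where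
  "Bg r F G p q =
     (if p \<le> r \<and> q \<le> r then G q * (F p - F q) * kdelta1 p q
      else if p \<le> r \<and> r < q then - G p * F (q - r) * cartan p (q - r)
      else if r < p \<and> q \<le> r then F (p - r) * G q * cartan (p - r) q
      else F (p - r) * (G (q - r) - G (p - r)) * kdelta1 (p - r) (q - r))"

definition up :: "nat \<Rightarrow> nat \<Rightarrow> nat" where "up r i = i + r"

lemma Bg_TT: "p \<le> r \<Longrightarrow> q \<le> r \<Longrightarrow> Bg r F G p q = G q * (F p - F q) * kdelta1 p q"
  unfolding Bg_def by simp
lemma Bg_TBu: "p \<le> r \<Longrightarrow> 0 < j \<Longrightarrow> Bg r F G p (up r j) = - G p * F j * cartan p j"
  unfolding Bg_def up_def by simp
lemma Bg_BTu: "0 < i \<Longrightarrow> q \<le> r \<Longrightarrow> Bg r F G (up r i) q = F i * G q * cartan i q"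
  unfolding Bg_def up_def by simp
lemma Bg_BBu: "0 < i \<Longrightarrow> 0 < j \<Longrightarrow> Bg r F G (up r i) (up r j) = F i * (G j - G i) * kdelta1 i j"
  unfolding Bg_def up_def by simp
lemma up_eq: "(up r a = up r b) = (a = b)"
  unfolding up_def by simp
lemma up_neq1: "a \<le> r \<Longrightarrow> 0 < b \<Longrightarrow> (a = up r b) = False"
  unfolding up_def by simp
lemma up_neq2: "a \<le> r \<Longrightarrow> 0 < b \<Longrightarrow> (up r b = a) = False"
  unfolding up_def by simp

definition sg :: "bool \<Rightarrow> int" where "sg b = (if b then 1 else -1)"

lemma combb_TT:
  fixes f g f' g' :: "nat \<Rightarrow> bool"
  assumes a: "\<alpha> \<in> {1..r}"
    and same: "\<forall>\<beta>\<in>{1..r}. \<beta> \<noteq> \<alpha> \<longrightarrow> f' \<beta> = f \<beta> \<and> g' \<beta> = g \<beta>"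
    and nb: "\<forall>\<beta>. 1 \<le> \<beta> \<and> \<beta> < r \<longrightarrow> f (\<beta> + 1) = f \<beta> \<or> g (\<beta> + 1) = g \<beta>"
    and nb': "\<forall>\<beta>. 1 \<le> \<beta> \<and> \<beta> < r \<longrightarrow> f' (\<beta> + 1) = f' \<beta> \<or> g' (\<beta> + 1) = g' \<beta>"
    and hk: "(k = \<alpha> \<and> f \<alpha> = g \<alpha> \<or> k = up r \<alpha> \<and> f \<alpha> \<noteq> g \<alpha>) \<and> f' \<alpha> = g \<alpha> \<and> g' \<alpha> = (\<not> f \<alpha>)"
    and i: "i \<in> {1..r}" and j: "j \<in> {1..r}"
  shows "mutate_B k (Bg r (\<lambda>\<beta>. sg (f \<beta>)) (\<lambda>\<beta>. sg (g \<beta>))) (i) (j) = Bg r (\<lambda>\<beta>. sg (f' \<beta>)) (\<lambda>\<beta>. sg (g' \<beta>)) (i) (j)"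
proof -
  have si: "i \<noteq> \<alpha> \<Longrightarrow> f' i = f i \<and> g' i = g i" using same i by blast
  have sj: "j \<noteq> \<alpha> \<Longrightarrow> f' j = f j \<and> g' j = g j" using same j by blast
  have n1: "i = \<alpha> + 1 \<Longrightarrow> f i = f \<alpha> \<or> g i = g \<alpha>" using nb a i by auto
  have n2: "\<alpha> = i + 1 \<Longrightarrow> f \<alpha> = f i \<or> g \<alpha> = g i" using nb a i by auto
  have n3: "j = \<alpha> + 1 \<Longrightarrow> f j = f \<alpha> \<or> g j = g \<alpha>" using nb a j by auto
  have n4: "\<alpha> = j + 1 \<Longrightarrow> f \<alpha> = f j \<or> g \<alpha> = g j" using nb a j by auto
  have m1: "i = \<alpha> + 1 \<Longrightarrow> f' i = f' \<alpha> \<or> g' i = g' \<alpha>" using nb' a i by auto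
  have m2: "\<alpha> = i + 1 \<Longrightarrow> f' \<alpha> = f' i \<or> g' \<alpha> = g' i" using nb' a i by auto
  have m3: "j = \<alpha> + 1 \<Longrightarrow> f' j = f' \<alpha> \<or> g' j = g' \<alpha>" using nb' a j by auto
  have m4: "\<alpha> = j + 1 \<Longrightarrow> f' \<alpha> = f' j \<or> g' \<alpha> = g' j" using nb' a j by auto
  have ci: "i = \<alpha> \<or> i = \<alpha> + 1 \<or> i + 1 = \<alpha> \<or> (i \<noteq> \<alpha> \<and> \<alpha> \<noteq> i \<and> i \<noteq> \<alpha> + 1 \<and> \<alpha> + 1 \<noteq> i \<and> i + 1 \<noteq> \<alpha> \<and> \<alpha> \<noteq> i + 1)" by auto
  have cj: "j = \<alpha> \<or> j = \<alpha> + 1 \<or> j + 1 = \<alpha> \<or> (j \<noteq> \<alpha> \<and> \<alpha> \<noteq> j \<and> j \<noteq> \<alpha> + 1 \<and> \<alpha> + 1 \<noteq> j \<and> j + 1 \<noteq> \<alpha> \<and> \<alpha> \<noteq> j + 1)" by auto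
  have kk: "(k = \<alpha> \<and> f \<alpha> = g \<alpha>) \<or> (k = up r \<alpha> \<and> f \<alpha> \<noteq> g \<alpha>)" using hk by blast
  have hk2: "f' \<alpha> = g \<alpha>" "g' \<alpha> = (\<not> f \<alpha>)" using hk by auto
  have pos: "0 < \<alpha>" "0 < i" "0 < j" "\<alpha> \<le> r" "i \<le> r" "j \<le> r"
    using a i j by auto
  show ?thesis
    using ci cj kk [[simproc del: ring_eq_cancel_numeral_factor]]
    apply (elim disjE conjE)
    apply (insert pos hk2 si sj n1 n2 n3 n4 m1 m2 m3 m4)
    apply (simp_all add: mutate_B_def Bg_TT Bg_TBu Bg_BTu Bg_BBu up_eq up_neq1 up_neq2 cartan_def kdelta1_def)
    apply (simp_all add: sg_def split: if_split)
    apply auto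
    done
qed

lemma combb_TB:
  fixes f g f' g' :: "nat \<Rightarrow> bool"
  assumes a: "\<alpha> \<in> {1..r}"
    and same: "\<forall>\<beta>\<in>{1..r}. \<beta> \<noteq> \<alpha> \<longrightarrow> f' \<beta> = f \<beta> \<and> g' \<beta> = g \<beta>"
    and nb: "\<forall>\<beta>. 1 \<le> \<beta> \<and> \<beta> < r \<longrightarrow> f (\<beta> + 1) = f \<beta> \<or> g (\<beta> + 1) = g \<beta>"
    and nb': "\<forall>\<beta>. 1 \<le> \<beta> \<and> \<beta> < r \<longrightarrow> f' (\<beta> + 1) = f' \<beta> \<or> g' (\<beta> + 1) = g' \<beta>"
    and hk: "(k = \<alpha> \<and> f \<alpha> = g \<alpha> \<or> k = up r \<alpha> \<and> f \<alpha> \<noteq> g \<alpha>) \<and> f' \<alpha> = g \<alpha> \<and> g' \<alpha> = (\<not> f \<alpha>)"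
    and i: "i \<in> {1..r}" and j: "j \<in> {1..r}"
  shows "mutate_B k (Bg r (\<lambda>\<beta>. sg (f \<beta>)) (\<lambda>\<beta>. sg (g \<beta>))) (i) (up r j) = Bg r (\<lambda>\<beta>. sg (f' \<beta>)) (\<lambda>\<beta>. sg (g' \<beta>)) (i) (up r j)"
proof -
  have si: "i \<noteq> \<alpha> \<Longrightarrow> f' i = f i \<and> g' i = g i" using same i by blast
  have sj: "j \<noteq> \<alpha> \<Longrightarrow> f' j = f j \<and> g' j = g j" using same j by blast
  have n1: "i = \<alpha> + 1 \<Longrightarrow> f i = f \<alpha> \<or> g i = g \<alpha>" using nb a i by auto
  have n2: "\<alpha> = i + 1 \<Longrightarrow> f \<alpha> = f i \<or> g \<alpha> = g i" using nb a i by auto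
  have n3: "j = \<alpha> + 1 \<Longrightarrow> f j = f \<alpha> \<or> g j = g \<alpha>" using nb a j by auto
  have n4: "\<alpha> = j + 1 \<Longrightarrow> f \<alpha> = f j \<or> g \<alpha> = g j" using nb a j by auto
  have m1: "i = \<alpha> + 1 \<Longrightarrow> f' i = f' \<alpha> \<or> g' i = g' \<alpha>" using nb' a i by auto
  have m2: "\<alpha> = i + 1 \<Longrightarrow> f' \<alpha> = f' i \<or> g' \<alpha> = g' i" using nb' a i by auto
  have m3: "j = \<alpha> + 1 \<Longrightarrow> f' j = f' \<alpha> \<or> g' j = g' \<alpha>" using nb' a j by auto
  have m4: "\<alpha> = j + 1 \<Longrightarrow> f' \<alpha> = f' j \<or> g' \<alpha> = g' j" using nb' a j by auto
  have ci: "i = \<alpha> \<or> i = \<alpha> + 1 \<or> i + 1 = \<alpha> \<or> (i \<noteq> \<alpha> \<and> \<alpha> \<noteq> i \<and> i \<noteq> \<alpha> + 1 \<and> \<alpha> + 1 \<noteq> i \<and> i + 1 \<noteq> \<alpha> \<and> \<alpha> \<noteq> i + 1)" by auto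
  have cj: "j = \<alpha> \<or> j = \<alpha> + 1 \<or> j + 1 = \<alpha> \<or> (j \<noteq> \<alpha> \<and> \<alpha> \<noteq> j \<and> j \<noteq> \<alpha> + 1 \<and> \<alpha> + 1 \<noteq> j \<and> j + 1 \<noteq> \<alpha> \<and> \<alpha> \<noteq> j + 1)" by auto
  have kk: "(k = \<alpha> \<and> f \<alpha> = g \<alpha>) \<or> (k = up r \<alpha> \<and> f \<alpha> \<noteq> g \<alpha>)" using hk by blast
  have hk2: "f' \<alpha> = g \<alpha>" "g' \<alpha> = (\<not> f \<alpha>)" using hk by auto
  have pos: "0 < \<alpha>" "0 < i" "0 < j" "\<alpha> \<le> r" "i \<le> r" "j \<le> r"
    using a i j by auto
  show ?thesis
    using ci cj kk [[simproc del: ring_eq_cancel_numeral_factor]]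
    apply (elim disjE conjE)
    apply (insert pos hk2 si sj n1 n2 n3 n4 m1 m2 m3 m4)
    apply (simp_all add: mutate_B_def Bg_TT Bg_TBu Bg_BTu Bg_BBu up_eq up_neq1 up_neq2 cartan_def kdelta1_def)
    apply (simp_all add: sg_def split: if_split)
    apply auto
    done
qed

lemma combb_BT:
  fixes f g f' g' :: "nat \<Rightarrow> bool"
  assumes a: "\<alpha> \<in> {1..r}"
    and same: "\<forall>\<beta>\<in>{1..r}. \<beta> \<noteq> \<alpha> \<longrightarrow> f' \<beta> = f \<beta> \<and> g' \<beta> = g \<beta>"
    and nb: "\<forall>\<beta>. 1 \<le> \<beta> \<and> \<beta> < r \<longrightarrow> f (\<beta> + 1) = f \<beta> \<or> g (\<beta> + 1) = g \<beta>"
    and nb': "\<forall>\<beta>. 1 \<le> \<beta> \<and> \<beta> < r \<longrightarrow> f' (\<beta> + 1) = f' \<beta> \<or> g' (\<beta> + 1) = g' \<beta>"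
    and hk: "(k = \<alpha> \<and> f \<alpha> = g \<alpha> \<or> k = up r \<alpha> \<and> f \<alpha> \<noteq> g \<alpha>) \<and> f' \<alpha> = g \<alpha> \<and> g' \<alpha> = (\<not> f \<alpha>)"
    and i: "i \<in> {1..r}" and j: "j \<in> {1..r}"
  shows "mutate_B k (Bg r (\<lambda>\<beta>. sg (f \<beta>)) (\<lambda>\<beta>. sg (g \<beta>))) (up r i) (j) = Bg r (\<lambda>\<beta>. sg (f' \<beta>)) (\<lambda>\<beta>. sg (g' \<beta>)) (up r i) (j)"
proof -
  have si: "i \<noteq> \<alpha> \<Longrightarrow> f' i = f i \<and> g' i = g i" using same i by blast
  have sj: "j \<noteq> \<alpha> \<Longrightarrow> f' j = f j \<and> g' j = g j" using same j by blast
  have n1: "i = \<alpha> + 1 \<Longrightarrow> f i = f \<alpha> \<or> g i = g \<alpha>" using nb a i by auto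
  have n2: "\<alpha> = i + 1 \<Longrightarrow> f \<alpha> = f i \<or> g \<alpha> = g i" using nb a i by auto
  have n3: "j = \<alpha> + 1 \<Longrightarrow> f j = f \<alpha> \<or> g j = g \<alpha>" using nb a j by auto
  have n4: "\<alpha> = j + 1 \<Longrightarrow> f \<alpha> = f j \<or> g \<alpha> = g j" using nb a j by auto
  have m1: "i = \<alpha> + 1 \<Longrightarrow> f' i = f' \<alpha> \<or> g' i = g' \<alpha>" using nb' a i by auto
  have m2: "\<alpha> = i + 1 \<Longrightarrow> f' \<alpha> = f' i \<or> g' \<alpha> = g' i" using nb' a i by auto
  have m3: "j = \<alpha> + 1 \<Longrightarrow> f' j = f' \<alpha> \<or> g' j = g' \<alpha>" using nb' a j by auto
  have m4: "\<alpha> = j + 1 \<Longrightarrow> f' \<alpha> = f' j \<or> g' \<alpha> = g' j" using nb' a j by auto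
  have ci: "i = \<alpha> \<or> i = \<alpha> + 1 \<or> i + 1 = \<alpha> \<or> (i \<noteq> \<alpha> \<and> \<alpha> \<noteq> i \<and> i \<noteq> \<alpha> + 1 \<and> \<alpha> + 1 \<noteq> i \<and> i + 1 \<noteq> \<alpha> \<and> \<alpha> \<noteq> i + 1)" by auto
  have cj: "j = \<alpha> \<or> j = \<alpha> + 1 \<or> j + 1 = \<alpha> \<or> (j \<noteq> \<alpha> \<and> \<alpha> \<noteq> j \<and> j \<noteq> \<alpha> + 1 \<and> \<alpha> + 1 \<noteq> j \<and> j + 1 \<noteq> \<alpha> \<and> \<alpha> \<noteq> j + 1)" by auto
  have kk: "(k = \<alpha> \<and> f \<alpha> = g \<alpha>) \<or> (k = up r \<alpha> \<and> f \<alpha> \<noteq> g \<alpha>)" using hk by blast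
  have hk2: "f' \<alpha> = g \<alpha>" "g' \<alpha> = (\<not> f \<alpha>)" using hk by auto
  have pos: "0 < \<alpha>" "0 < i" "0 < j" "\<alpha> \<le> r" "i \<le> r" "j \<le> r"
    using a i j by auto
  show ?thesis
    using ci cj kk [[simproc del: ring_eq_cancel_numeral_factor]]
    apply (elim disjE conjE)
    apply (insert pos hk2 si sj n1 n2 n3 n4 m1 m2 m3 m4)
    apply (simp_all add: mutate_B_def Bg_TT Bg_TBu Bg_BTu Bg_BBu up_eq up_neq1 up_neq2 cartan_def kdelta1_def)
    apply (simp_all add: sg_def split: if_split)
    apply auto
    done
qed

lemma combb_BB:
  fixes f g f' g' :: "nat \<Rightarrow> bool"
  assumes a: "\<alpha> \<in> {1..r}"
    and same: "\<forall>\<beta>\<in>{1..r}. \<beta> \<noteq> \<alpha> \<longrightarrow> f' \<beta> = f \<beta> \<and> g' \<beta> = g \<beta>"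
    and nb: "\<forall>\<beta>. 1 \<le> \<beta> \<and> \<beta> < r \<longrightarrow> f (\<beta> + 1) = f \<beta> \<or> g (\<beta> + 1) = g \<beta>"
    and nb': "\<forall>\<beta>. 1 \<le> \<beta> \<and> \<beta> < r \<longrightarrow> f' (\<beta> + 1) = f' \<beta> \<or> g' (\<beta> + 1) = g' \<beta>"
    and hk: "(k = \<alpha> \<and> f \<alpha> = g \<alpha> \<or> k = up r \<alpha> \<and> f \<alpha> \<noteq> g \<alpha>) \<and> f' \<alpha> = g \<alpha> \<and> g' \<alpha> = (\<not> f \<alpha>)"
    and i: "i \<in> {1..r}" and j: "j \<in> {1..r}"
  shows "mutate_B k (Bg r (\<lambda>\<beta>. sg (f \<beta>)) (\<lambda>\<beta>. sg (g \<beta>))) (up r i) (up r j) = Bg r (\<lambda>\<beta>. sg (f' \<beta>)) (\<lambda>\<beta>. sg (g' \<beta>)) (up r i) (up r j)"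
proof -
  have si: "i \<noteq> \<alpha> \<Longrightarrow> f' i = f i \<and> g' i = g i" using same i by blast
  have sj: "j \<noteq> \<alpha> \<Longrightarrow> f' j = f j \<and> g' j = g j" using same j by blast
  have n1: "i = \<alpha> + 1 \<Longrightarrow> f i = f \<alpha> \<or> g i = g \<alpha>" using nb a i by auto
  have n2: "\<alpha> = i + 1 \<Longrightarrow> f \<alpha> = f i \<or> g \<alpha> = g i" using nb a i by auto
  have n3: "j = \<alpha> + 1 \<Longrightarrow> f j = f \<alpha> \<or> g j = g \<alpha>" using nb a j by auto
  have n4: "\<alpha> = j + 1 \<Longrightarrow> f \<alpha> = f j \<or> g \<alpha> = g j" using nb a j by auto
  have m1: "i = \<alpha> + 1 \<Longrightarrow> f' i = f' \<alpha> \<or> g' i = g' \<alpha>" using nb' a i by auto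
  have m2: "\<alpha> = i + 1 \<Longrightarrow> f' \<alpha> = f' i \<or> g' \<alpha> = g' i" using nb' a i by auto
  have m3: "j = \<alpha> + 1 \<Longrightarrow> f' j = f' \<alpha> \<or> g' j = g' \<alpha>" using nb' a j by auto
  have m4: "\<alpha> = j + 1 \<Longrightarrow> f' \<alpha> = f' j \<or> g' \<alpha> = g' j" using nb' a j by auto
  have ci: "i = \<alpha> \<or> i = \<alpha> + 1 \<or> i + 1 = \<alpha> \<or> (i \<noteq> \<alpha> \<and> \<alpha> \<noteq> i \<and> i \<noteq> \<alpha> + 1 \<and> \<alpha> + 1 \<noteq> i \<and> i + 1 \<noteq> \<alpha> \<and> \<alpha> \<noteq> i + 1)" by auto
  have cj: "j = \<alpha> \<or> j = \<alpha> + 1 \<or> j + 1 = \<alpha> \<or> (j \<noteq> \<alpha> \<and> \<alpha> \<noteq> j \<and> j \<noteq> \<alpha> + 1 \<and> \<alpha> + 1 \<noteq> j \<and> j + 1 \<noteq> \<alpha> \<and> \<alpha> \<noteq> j + 1)" by auto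
  have kk: "(k = \<alpha> \<and> f \<alpha> = g \<alpha>) \<or> (k = up r \<alpha> \<and> f \<alpha> \<noteq> g \<alpha>)" using hk by blast
  have hk2: "f' \<alpha> = g \<alpha>" "g' \<alpha> = (\<not> f \<alpha>)" using hk by auto
  have pos: "0 < \<alpha>" "0 < i" "0 < j" "\<alpha> \<le> r" "i \<le> r" "j \<le> r"
    using a i j by auto
  show ?thesis
    using ci cj kk [[simproc del: ring_eq_cancel_numeral_factor]]
    apply (elim disjE conjE)
    apply (insert pos hk2 si sj n1 n2 n3 n4 m1 m2 m3 m4)
    apply (simp_all add: mutate_B_def Bg_TT Bg_TBu Bg_BTu Bg_BBu up_eq up_neq1 up_neq2 cartan_def kdelta1_def)
    apply (simp_all add: sg_def split: if_split)
    apply auto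
    done
qed

lemma neg1pow_add: "neg1pow (a + b) = neg1pow a * neg1pow b"
  unfolding neg1pow_def by auto

lemma neg1pow_pm: "neg1pow a = 1 \<or> neg1pow a = -1"
  unfolding neg1pow_def by auto

definition fF :: "int \<Rightarrow> int" where "fF a = neg1pow (a div 2)"
definition gG :: "int \<Rightarrow> int" where "gG a = neg1pow ((a + 1) div 2)"

lemma fF_mod: "fF a = (if a mod 4 = 0 \<or> a mod 4 = 1 then 1 else -1)"
  unfolding fF_def neg1pow_def by presburger

lemma gG_mod: "gG a = (if a mod 4 = 0 \<or> a mod 4 = 3 then 1 else -1)"
  unfolding gG_def neg1pow_def by presburger

lemma fF_succ: "fF (a + 1) = gG a"
  unfolding fF_mod gG_mod by presburger

lemma gG_succ: "gG (a + 1) = - fF a"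
  unfolding fF_mod gG_mod by presburger

lemma even_fg: "even a \<longleftrightarrow> fF a = gG a"
  unfolding fF_mod gG_mod by presburger

lemma odd_fg: "odd a \<longleftrightarrow> fF a = - gG a"
  unfolding fF_mod gG_mod by presburger

lemma nb_fg: "\<bar>b - a\<bar> \<le> 1 \<Longrightarrow> \<not> (fF b = - fF a \<and> gG b = - gG a)"
  unfolding fF_mod gG_mod by presburger

lemma BM_Bg: "B_of_M r M p q = Bg r (\<lambda>\<beta>. fF (M \<beta>)) (\<lambda>\<beta>. gG (M \<beta>)) p q"
  unfolding B_of_M_def Bg_def fF_def gG_def Let_def
  by (simp add: neg1pow_add neg1pow_def)

lemma mutate_B_invol: "mutate_B k (mutate_B k B) p q = B p q"
  unfolding mutate_B_def by (auto simp: sgn_minus)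

lemma mutate_B_cong: "B1 p q = B2 p q \<Longrightarrow> B1 p k = B2 p k \<Longrightarrow> B1 k q = B2 k q \<Longrightarrow>
   mutate_B k B1 p q = mutate_B k B2 p q"
  unfolding mutate_B_def by simp

lemma fF_sg: "fF a = sg (a mod 4 = 0 \<or> a mod 4 = 1)"
  unfolding fF_mod sg_def by simp

lemma gG_sg: "gG a = sg (a mod 4 = 0 \<or> a mod 4 = 3)"
  unfolding gG_mod sg_def by simp

lemma sg_inj: "(sg a = sg b) = (a = b)"
  unfolding sg_def by auto

lemma sg_neg: "(sg a = - sg b) = (a = (\<not> b))"
  unfolding sg_def by auto

lemma nb_bool: "\<bar>(b::int) - a\<bar> \<le> 1 \<Longrightarrow> ((b mod 4 = 0 \<or> b mod 4 = 1) = (a mod 4 = 0 \<or> a mod 4 = 1)) \<or> ((b mod 4 = 0 \<or> b mod 4 = 3) = (a mod 4 = 0 \<or> a mod 4 = 3))"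
  using nb_fg[of b a] unfolding fF_sg gG_sg sg_neg by auto

lemma step_plus:
  assumes M: "motzkin r M" and M': "motzkin r M'" and a: "\<alpha> \<in> {1..r}"
    and upd: "\<forall>\<beta>\<in>{1..r}. M' \<beta> = (if \<beta> = \<alpha> then M \<alpha> + 1 else M \<beta>)"
    and k: "k = (if even (M \<alpha>) then \<alpha> else \<alpha> + r)"
    and p: "p \<in> {1..2*r}" and q: "q \<in> {1..2*r}"
  shows "mutate_B k (B_of_M r M) p q = B_of_M r M' p q"
proof -
  define f where "f \<beta> = (M \<beta> mod 4 = 0 \<or> M \<beta> mod 4 = 1)" for \<beta>
  define g where "g \<beta> = (M \<beta> mod 4 = 0 \<or> M \<beta> mod 4 = 3)" for \<beta>
  define f' where "f' \<beta> = (M' \<beta> mod 4 = 0 \<or> M' \<beta> mod 4 = 1)" for \<beta>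
  define g' where "g' \<beta> = (M' \<beta> mod 4 = 0 \<or> M' \<beta> mod 4 = 3)" for \<beta>
  have e1: "B_of_M r M = Bg r (\<lambda>\<beta>. sg (f \<beta>)) (\<lambda>\<beta>. sg (g \<beta>))"
    unfolding f_def g_def by (intro ext) (simp add: BM_Bg fF_sg gG_sg)
  have e2: "B_of_M r M' p q = Bg r (\<lambda>\<beta>. sg (f' \<beta>)) (\<lambda>\<beta>. sg (g' \<beta>)) p q"
    unfolding f'_def g'_def by (simp add: BM_Bg fF_sg gG_sg)
  have same: "\<forall>\<beta>\<in>{1..r}. \<beta> \<noteq> \<alpha> \<longrightarrow> f' \<beta> = f \<beta> \<and> g' \<beta> = g \<beta>"
  proof (intro ballI impI)
    fix \<beta> assume b: "\<beta> \<in> {1..r}" "\<beta> \<noteq> \<alpha>"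
    then have "M' \<beta> = M \<beta>" using upd by auto
    then show "f' \<beta> = f \<beta> \<and> g' \<beta> = g \<beta>" unfolding f_def g_def f'_def g'_def by simp
  qed
  have nb: "\<forall>\<beta>. 1 \<le> \<beta> \<and> \<beta> < r \<longrightarrow> f (\<beta> + 1) = f \<beta> \<or> g (\<beta> + 1) = g \<beta>"
  proof (intro allI impI)
    fix \<beta> :: nat assume "1 \<le> \<beta> \<and> \<beta> < r"
    then have "\<bar>M (\<beta> + 1) - M \<beta>\<bar> \<le> 1" using M unfolding motzkin_def by blast
    then show "f (\<beta> + 1) = f \<beta> \<or> g (\<beta> + 1) = g \<beta>" unfolding f_def g_def by (rule nb_bool)
  qed
  have nb': "\<forall>\<beta>. 1 \<le> \<beta> \<and> \<beta> < r \<longrightarrow> f' (\<beta> + 1) = f' \<beta> \<or> g' (\<beta> + 1) = g' \<beta>"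
  proof (intro allI impI)
    fix \<beta> :: nat assume "1 \<le> \<beta> \<and> \<beta> < r"
    then have "\<bar>M' (\<beta> + 1) - M' \<beta>\<bar> \<le> 1" using M' unfolding motzkin_def by blast
    then show "f' (\<beta> + 1) = f' \<beta> \<or> g' (\<beta> + 1) = g' \<beta>" unfolding f'_def g'_def by (rule nb_bool)
  qed
  have Ma: "M' \<alpha> = M \<alpha> + 1" using upd a by auto
  have r1: "f' \<alpha> = g \<alpha>" using fF_succ[of "M \<alpha>"] unfolding f'_def g_def Ma fF_sg gG_sg sg_inj .
  have r2: "g' \<alpha> = (\<not> f \<alpha>)" using gG_succ[of "M \<alpha>"] unfolding g'_def f_def Ma fF_sg gG_sg sg_neg .
  have r3: "even (M \<alpha>) \<longleftrightarrow> f \<alpha> = g \<alpha>" using even_fg[of "M \<alpha>"] unfolding f_def g_def fF_sg gG_sg sg_inj .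
  have hk: "(k = \<alpha> \<and> f \<alpha> = g \<alpha> \<or> k = up r \<alpha> \<and> f \<alpha> \<noteq> g \<alpha>) \<and> f' \<alpha> = g \<alpha> \<and> g' \<alpha> = (\<not> f \<alpha>)"
    using k r1 r2 r3 unfolding up_def by auto
  obtain i where i: "i \<in> {1..r}" "p = i \<or> p = up r i"
  proof (cases "p \<le> r")
    case True then show ?thesis using that[of p] p by auto
  next
    case False
    then have "p - r \<in> {1..r}" "p = up r (p - r)" using p unfolding up_def by auto
    then show ?thesis using that[of "p - r"] by blast
  qed
  obtain j where j: "j \<in> {1..r}" "q = j \<or> q = up r j"
  proof (cases "q \<le> r")
    case True then show ?thesis using that[of q] q by auto
  next
    case False
    then have "q - r \<in> {1..r}" "q = up r (q - r)" using q unfolding up_def by auto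
    then show ?thesis using that[of "q - r"] by blast
  qed
  have "mutate_B k (Bg r (\<lambda>\<beta>. sg (f \<beta>)) (\<lambda>\<beta>. sg (g \<beta>))) p q = Bg r (\<lambda>\<beta>. sg (f' \<beta>)) (\<lambda>\<beta>. sg (g' \<beta>)) p q"
    using i(2) j(2)
    using combb_TT[OF a same nb nb' hk i(1) j(1)] combb_TB[OF a same nb nb' hk i(1) j(1)]
      combb_BT[OF a same nb nb' hk i(1) j(1)] combb_BB[OF a same nb nb' hk i(1) j(1)]
    by auto
  then show ?thesis using e1 e2 by simp
qed

lemma step_minus:
  assumes M: "motzkin r M" and M': "motzkin r M'" and a: "\<alpha> \<in> {1..r}"
    and upd: "\<forall>\<beta>\<in>{1..r}. M' \<beta> = (if \<beta> = \<alpha> then M \<alpha> - 1 else M \<beta>)"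
    and k: "k = (if odd (M \<alpha>) then \<alpha> else \<alpha> + r)"
    and p: "p \<in> {1..2*r}" and q: "q \<in> {1..2*r}"
  shows "mutate_B k (B_of_M r M) p q = B_of_M r M' p q"
proof -
  have upd': "\<forall>\<beta>\<in>{1..r}. M \<beta> = (if \<beta> = \<alpha> then M' \<alpha> + 1 else M' \<beta>)"
    using upd a by auto
  have Ma: "M' \<alpha> = M \<alpha> - 1" using upd a by auto
  have k': "k = (if even (M' \<alpha>) then \<alpha> else \<alpha> + r)" using k Ma by auto
  have kr: "k \<in> {1..2*r}" using k a by auto
  have H: "B_of_M r M p' q' = mutate_B k (B_of_M r M') p' q'"
    if "p' \<in> {1..2*r}" "q' \<in> {1..2*r}" for p' q'
    using step_plus[OF M' M a upd' k' that] by simp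
  have "mutate_B k (B_of_M r M) p q = mutate_B k (mutate_B k (B_of_M r M')) p q"
    by (rule mutate_B_cong) (use H p q kr in auto)
  then show ?thesis by (simp add: mutate_B_invol)
qed

lemma cluster_inj:
  fixes R :: "nat \<Rightarrow> int \<Rightarrow> 'a::field"
  assumes Q: "is_Q_system r R" and indep: "alg_indep {1..2*r} (motzkin_cluster r R (\<lambda>_. 0))"
    and eq: "\<forall>i\<in>{1..2*r}. motzkin_cluster r R M i = motzkin_cluster r R M' i"
    and b: "\<beta> \<in> {1..r}"
  shows "M \<beta> = M' \<beta>"
proof -
  have "motzkin_cluster r R M \<beta> = motzkin_cluster r R M' \<beta>" using eq b by auto
  then have e1: "R \<beta> (if even (M \<beta>) then M \<beta> else M \<beta> + 1) = R \<beta> (if even (M' \<beta>) then M' \<beta> else M' \<beta> + 1)"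
    using b unfolding motzkin_cluster_def by (auto split: if_splits)
  have "motzkin_cluster r R M (\<beta> + r) = motzkin_cluster r R M' (\<beta> + r)" using eq b by auto
  then have e2: "R \<beta> (if odd (M \<beta>) then M \<beta> else M \<beta> + 1) = R \<beta> (if odd (M' \<beta>) then M' \<beta> else M' \<beta> + 1)"
    using b unfolding motzkin_cluster_def by (auto split: if_splits)
  have "(if even (M \<beta>) then M \<beta> else M \<beta> + 1) = (if even (M' \<beta>) then M' \<beta> else M' \<beta> + 1)"
    by (rule R_inj[OF Q indep b e1]) presburger
  moreover have "(if odd (M \<beta>) then M \<beta> else M \<beta> + 1) = (if odd (M' \<beta>) then M' \<beta> else M' \<beta> + 1)"
    by (rule R_inj[OF Q indep b e2]) presburger
  ultimately show ?thesis by presburger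
qed

lemma BM_cong:
  assumes h: "\<forall>\<beta>\<in>{1..r}. M \<beta> = M' \<beta>" and p: "p \<in> {1..2*r}" and q: "q \<in> {1..2*r}"
  shows "B_of_M r M p q = B_of_M r M' p q"
proof -
  have A: "p \<le> r \<Longrightarrow> M p = M' p" "r < p \<Longrightarrow> M (p - r) = M' (p - r)"
    "q \<le> r \<Longrightarrow> M q = M' q" "r < q \<Longrightarrow> M (q - r) = M' (q - r)"
  proof -
    show "p \<le> r \<Longrightarrow> M p = M' p" using h p by auto
    show "r < p \<Longrightarrow> M (p - r) = M' (p - r)"
    proof -
      assume "r < p"
      then have "p - r \<in> {1..r}" using p by auto
      then show ?thesis using h by blast
    qed
    show "q \<le> r \<Longrightarrow> M q = M' q" using h q by auto
    show "r < q \<Longrightarrow> M (q - r) = M' (q - r)"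
    proof -
      assume "r < q"
      then have "q - r \<in> {1..r}" using q by auto
      then show ?thesis using h by blast
    qed
  qed
  show ?thesis unfolding B_of_M_def Let_def using A by auto
qed

lemma BM_zero: "B_of_M r (\<lambda>_. 0) p q = B0 r p q"
  unfolding B_of_M_def B0_def Let_def neg1pow_def by auto

theorem mainTheorem12:
  fixes r :: nat
    and R :: "nat \<Rightarrow> int \<Rightarrow> 'a::field_char_0"
    and N :: nat
    and xs :: "nat \<Rightarrow> nat \<Rightarrow> 'a"
    and Bs :: "nat \<Rightarrow> nat \<Rightarrow> nat \<Rightarrow> int"
    and ks :: "nat \<Rightarrow> nat"
    and Ms :: "nat \<Rightarrow> nat \<Rightarrow> int"
    and M :: "nat \<Rightarrow> int"
  assumes r_pos: "1 \<le> r"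
    and Q: "is_Q_system r R"
    and indep: "alg_indep {1..2*r} (motzkin_cluster r R (\<lambda>_. 0))"
    and init_x: "\<forall>i\<in>{1..2*r}. xs 0 i = motzkin_cluster r R (\<lambda>_. 0) i"
    and init_B: "\<forall>i\<in>{1..2*r}. \<forall>j\<in>{1..2*r}. Bs 0 i j = B0 r i j"
    and ks_range: "\<forall>t<N. ks t \<in> {1..2*r}"
    and step_x: "\<forall>t<N. xs (Suc t) = mutate_x r (Bs t) (ks t) (xs t)"
    and step_B: "\<forall>t<N. Bs (Suc t) = mutate_B (ks t) (Bs t)"
    and paths: "\<forall>t\<le>N. motzkin r (Ms t) \<and> (\<forall>i\<in>{1..2*r}. xs t i = motzkin_cluster r R (Ms t) i)"
    and Qmut: "\<forall>t<N. Q_mutation_step r (Ms t) (Ms (Suc t)) (ks t)"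
    and M_motzkin: "motzkin r M"
    and final: "\<forall>i\<in>{1..2*r}. xs N i = motzkin_cluster r R M i"
  shows "\<forall>i\<in>{1..2*r}. \<forall>j\<in>{1..2*r}. Bs N i j = B_of_M r M i j"
proof -
  have RI: "a = b" if "\<beta> \<in> {1..r}" "R \<beta> a = R \<beta> b" "even (a - b)" for \<beta> a b
    using R_inj[OF Q indep that] .
  have main: "\<forall>p\<in>{1..2*r}. \<forall>q\<in>{1..2*r}. Bs t p q = B_of_M r (Ms t) p q" if "t \<le> N" for t
    using that
  proof (induction t)
    case 0
    have "\<forall>i\<in>{1..2*r}. motzkin_cluster r R (Ms 0) i = motzkin_cluster r R (\<lambda>_. 0) i"
      using paths init_x by auto
    then have z: "\<forall>\<beta>\<in>{1..r}. Ms 0 \<beta> = 0"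
      using cluster_inj[OF Q indep] by fastforce
    show ?case
    proof (intro ballI)
      fix p q assume p: "p \<in> {1..2*r}" and q: "q \<in> {1..2*r}"
      have "B_of_M r (Ms 0) p q = B_of_M r (\<lambda>_. 0) p q" by (rule BM_cong[OF _ p q]) (use z in simp)
      then show "Bs 0 p q = B_of_M r (Ms 0) p q" using init_B p q BM_zero by simp
    qed
  next
    case (Suc t)
    have t: "t < N" using Suc.prems by simp
    have IH: "\<forall>p\<in>{1..2*r}. \<forall>q\<in>{1..2*r}. Bs t p q = B_of_M r (Ms t) p q" using Suc t by simp
    define k where "k = ks t"
    define m where "m = Ms t"
    define m' where "m' = Ms (Suc t)"
    have kr: "k \<in> {1..2*r}" using ks_range t k_def by auto
    have Mm: "motzkin r m" and Mm': "motzkin r m'" using paths t m_def m'_def by auto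
    have cl: "\<forall>i\<in>{1..2*r}. xs t i = motzkin_cluster r R m i" using paths t m_def by auto
    have cl': "\<forall>i\<in>{1..2*r}. xs (Suc t) i = motzkin_cluster r R m' i" using paths t m'_def by auto
    have xst: "xs (Suc t) = mutate_x r (Bs t) k (xs t)" using step_x t k_def by auto
    have unch: "motzkin_cluster r R m' u = motzkin_cluster r R m u" if "u \<in> {1..2*r}" "u \<noteq> k" for u
    proof -
      have "xs (Suc t) u = xs t u" using xst that unfolding mutate_x_def by simp
      then show ?thesis using cl cl' that by auto
    qed
    obtain \<alpha> e where a: "\<alpha> \<in> {1..r}" and e: "e \<in> {1, -1}"
      and upd: "\<forall>\<beta>\<in>{1..r}. m' \<beta> = (if \<beta> = \<alpha> then m \<alpha> + e else m \<beta>)"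
      and ka: "k = \<alpha> \<or> k = \<alpha> + r"
      using Qmut t unfolding Q_mutation_step_def m_def m'_def k_def by blast
    have ar: "\<alpha> \<in> {1..2*r}" "\<alpha> + r \<in> {1..2*r}" "\<alpha> \<noteq> \<alpha> + r" using a r_pos by auto
    have ma: "m' \<alpha> = m \<alpha> + e" using upd a by auto
    have c1: "motzkin_cluster r R n \<alpha> = (if even (n \<alpha>) then R \<alpha> (n \<alpha>) else R \<alpha> (n \<alpha> + 1))" for n
      using a unfolding motzkin_cluster_def by auto
    have c2: "motzkin_cluster r R n (\<alpha> + r) = (if odd (n \<alpha>) then R \<alpha> (n \<alpha>) else R \<alpha> (n \<alpha> + 1))" for n
      using a unfolding motzkin_cluster_def by auto
    have step: "mutate_B k (B_of_M r m) p q = B_of_M r m' p q" if p: "p \<in> {1..2*r}" and q: "q \<in> {1..2*r}" for p q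
    proof (cases "e = 1")
      case True
      have upd1: "\<forall>\<beta>\<in>{1..r}. m' \<beta> = (if \<beta> = \<alpha> then m \<alpha> + 1 else m \<beta>)" using upd True by simp
      have kk: "k = (if even (m \<alpha>) then \<alpha> else \<alpha> + r)"
      proof (cases "even (m \<alpha>)")
        case ev: True
        show ?thesis
        proof (rule ccontr)
          assume "k \<noteq> (if even (m \<alpha>) then \<alpha> else \<alpha> + r)"
          then have "k \<noteq> \<alpha>" using ev by simp
          then have "motzkin_cluster r R m' \<alpha> = motzkin_cluster r R m \<alpha>" using unch ar by blast
          then have "R \<alpha> (m \<alpha> + 2) = R \<alpha> (m \<alpha>)" using ev ma True c1[of m] c1[of m'] by (simp add: add.assoc)
          then show False using RI[OF a] by fastforce
        qed
      next
        case od: False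
        show ?thesis
        proof (rule ccontr)
          assume "k \<noteq> (if even (m \<alpha>) then \<alpha> else \<alpha> + r)"
          then have "k \<noteq> \<alpha> + r" using od by simp
          then have "motzkin_cluster r R m' (\<alpha> + r) = motzkin_cluster r R m (\<alpha> + r)" using unch ar by blast
          then have "R \<alpha> (m \<alpha> + 2) = R \<alpha> (m \<alpha>)" using od ma True c2[of m] c2[of m'] by (simp add: add.assoc)
          then show False using RI[OF a] by fastforce
        qed
      qed
      show ?thesis by (rule step_plus[OF Mm Mm' a upd1 kk p q])
    next
      case False
      then have em: "e = -1" using e by simp
      have upd1: "\<forall>\<beta>\<in>{1..r}. m' \<beta> = (if \<beta> = \<alpha> then m \<alpha> - 1 else m \<beta>)" using upd em by simp
      have kk: "k = (if odd (m \<alpha>) then \<alpha> else \<alpha> + r)"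
      proof (cases "odd (m \<alpha>)")
        case od: True
        show ?thesis
        proof (rule ccontr)
          assume "k \<noteq> (if odd (m \<alpha>) then \<alpha> else \<alpha> + r)"
          then have "k \<noteq> \<alpha>" using od by simp
          then have "motzkin_cluster r R m' \<alpha> = motzkin_cluster r R m \<alpha>" using unch ar by blast
          then have "R \<alpha> (m \<alpha> - 1) = R \<alpha> (m \<alpha> + 1)" using od ma em c1[of m] c1[of m'] by simp
          then show False using RI[OF a] by fastforce
        qed
      next
        case ev: False
        show ?thesis
        proof (rule ccontr)
          assume "k \<noteq> (if odd (m \<alpha>) then \<alpha> else \<alpha> + r)"
          then have "k \<noteq> \<alpha> + r" using ev by simp
          then have "motzkin_cluster r R m' (\<alpha> + r) = motzkin_cluster r R m (\<alpha> + r)" using unch ar by blast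
          then have "R \<alpha> (m \<alpha> - 1) = R \<alpha> (m \<alpha> + 1)" using ev ma em c2[of m] c2[of m'] by simp
          then show False using RI[OF a] by fastforce
        qed
      qed
      show ?thesis by (rule step_minus[OF Mm Mm' a upd1 kk p q])
    qed
    show ?case
    proof (intro ballI)
      fix p q assume p: "p \<in> {1..2*r}" and q: "q \<in> {1..2*r}"
      have "Bs (Suc t) p q = mutate_B k (Bs t) p q" using step_B t k_def by auto
      also have "\<dots> = mutate_B k (B_of_M r m) p q"
        by (rule mutate_B_cong) (use IH p q kr m_def in auto)
      also have "\<dots> = B_of_M r m' p q" by (rule step[OF p q])
      finally show "Bs (Suc t) p q = B_of_M r (Ms (Suc t)) p q" using m'_def by simp
    qed
  qed
  have fin: "\<forall>\<beta>\<in>{1..r}. Ms N \<beta> = M \<beta>"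
  proof
    fix \<beta> assume b: "\<beta> \<in> {1..r}"
    have "\<forall>i\<in>{1..2*r}. motzkin_cluster r R (Ms N) i = motzkin_cluster r R M i"
      using paths final by auto
    then show "Ms N \<beta> = M \<beta>" using cluster_inj[OF Q indep _ b] by blast
  qed
  show ?thesis
  proof (intro ballI)
    fix i j assume i: "i \<in> {1..2*r}" and j: "j \<in> {1..2*r}"
    have "Bs N i j = B_of_M r (Ms N) i j" using main[of N] i j by simp
    also have "\<dots> = B_of_M r M i j" by (rule BM_cong[OF fin i j])
    finally show "Bs N i j = B_of_M r M i j" .
  qed
qed

end
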